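(* Assume that the super Poincaré inequality $$\mu(f^2)\le r\,\mathcal E(f)+\beta(r)\,\mu(|f|)^2,\qquad r>0,\ f\in\mathcal D(\mathcal E),$$ holds for some decreasing function $\beta:(0,\infty)\to(0,\infty)$. Then for any integers $n,k\ge1$, any $s>0$ and any $f\in\mathcal A$, $$\mu_V(f^21_{\{\rho\le n\}})\le 2s\,e^{K_{n,k}(V)}\mathcal E_V(f)+16\lambda s\,e^{K_{n,k}(V)}\mu_V(f^2)+16s\,e^{Z_n(V)}\eta_{n,k}\|f\|_\infty^2+\beta(s)e^{J_{n,k}(V)}\mu_V(|f|)^2.$$
   Context: Setting: $(E,d)$ is a Polish space with Borel $\sigma$-field and a probability measure $\mu$. Let $q:E\times E\to[0,\infty)$ be measurable with $q(x,x)=0$ for all $x$, and $\lambda:=\sup_{x\in E}\int_E(1\wedge d(x,y)^2)q(x,y)\,\mu(\mathrm dy)<\infty.$ For bounded measurable $f,g$ set $\Gamma(f,g)(x)=\int_E(f(x)-f(y))(g(x)-g(y))q(x,y)\mu(\mathrm dy)$, $\Gamma(f)=\Gamma(f,f)$; $\mathcal A$ is the set of bounded measurable $f$ with $\Gamma(f)$ bounded, assumed dense in $L^2(\mu)$. $(\mathcal E,\mathcal D(\mathcal E))$ is the closure in $L^2(\mu)$ of $\mathcal E(f,g)=\mu(\Gamma(f,g))$ on $\mathcal A$, $\mathcal E(f)=\mathcal E(f,f)$. Fix $o\in E$, $\rho(x)=d(o,x)$. $V$ is measurable, bounded on each $\{\rho\le r\}$, with $\mu(e^V)=1$; $\mu_V=e^V\mu$;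 $\mathcal E_V(f)=\mu_V(\Gamma(f))$ for $f\in\mathcal A$. $\|f\|_\infty$ is the uniform norm. Notation: $K_{n,k}(V)=\sup_{\rho\le n+2}V-\inf_{\rho\le n+k+2}V$; $J_{n,k}(V)=\sup_{\rho\le n+1}V-2\inf_{\rho\le n+k+2}V$; $Z_n(V)=\sup_{\rho\le n+1}V$; $\eta_{n,k}=\iint_{\{\rho(x)>n+k+2,\ \rho(y)\le n+1\}}q(x,y)\mu(\mathrm dy)\mu(\mathrm dx)$. *)

theory Defs
  imports "HOL-Probability.Probability"
begin

definition Gam :: "'a measure \<Rightarrow> ('a \<Rightarrow> 'a \<Rightarrow> real) \<Rightarrow> ('a \<Rightarrow> real) \<Rightarrow> 'a \<Rightarrow> ennreal" where
  "Gam M q f x = (\<integral>\<^sup>+ y. ennreal ((f x - f y)\<^sup>2 * q x y) \<partial>M)"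

definition Aset :: "'a measure \<Rightarrow> ('a \<Rightarrow> 'a \<Rightarrow> real) \<Rightarrow> ('a \<Rightarrow> real) set" where
  "Aset M q = {f. f \<in> borel_measurable M \<and> bounded (range f) \<and> (\<exists>C::real. \<forall>x. Gam M q f x \<le> ennreal C)}"

definition Energy :: "'a measure \<Rightarrow> ('a \<Rightarrow> 'a \<Rightarrow> real) \<Rightarrow> ('a \<Rightarrow> real) \<Rightarrow> ennreal" where
  "Energy M q f = (\<integral>\<^sup>+ x. Gam M q f x \<partial>M)"

definition EnergyV :: "'a measure \<Rightarrow> ('a \<Rightarrow> 'a \<Rightarrow> real) \<Rightarrow> ('a \<Rightarrow> real) \<Rightarrow> ('a \<Rightarrow> real) \<Rightarrow> ennreal" where
  "EnergyV M q V f = (\<integral>\<^sup>+ x. Gam M q f x \<partial>(density M (\<lambda>x. ennreal (exp (V x)))))"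

definition lam :: "'a::metric_space measure \<Rightarrow> ('a \<Rightarrow> 'a \<Rightarrow> real) \<Rightarrow> ennreal" where
  "lam M q = (SUP x. \<integral>\<^sup>+ y. ennreal (min 1 ((dist x y)\<^sup>2) * q x y) \<partial>M)"

definition Kc :: "'a::metric_space \<Rightarrow> ('a \<Rightarrow> real) \<Rightarrow> nat \<Rightarrow> nat \<Rightarrow> real" where
  "Kc z0 V n k = Sup (V ` {x. dist z0 x \<le> real n + 2}) - Inf (V ` {x. dist z0 x \<le> real n + real k + 2})"

definition Jc :: "'a::metric_space \<Rightarrow> ('a \<Rightarrow> real) \<Rightarrow> nat \<Rightarrow> nat \<Rightarrow> real" where
  "Jc z0 V n k = Sup (V ` {x. dist z0 x \<le> real n + 1}) - 2 * Inf (V ` {x. dist z0 x \<le> real n + real k + 2})"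

definition Zc :: "'a::metric_space \<Rightarrow> ('a \<Rightarrow> real) \<Rightarrow> nat \<Rightarrow> real" where
  "Zc z0 V n = Sup (V ` {x. dist z0 x \<le> real n + 1})"

definition eta :: "'a::metric_space measure \<Rightarrow> ('a \<Rightarrow> 'a \<Rightarrow> real) \<Rightarrow> 'a \<Rightarrow> nat \<Rightarrow> nat \<Rightarrow> ennreal" where
  "eta M q z0 n k = (\<integral>\<^sup>+ x. \<integral>\<^sup>+ y. ennreal (indicator {x. dist z0 x > real n + real k + 2} x
       * indicator {y. dist z0 y \<le> real n + 1} y * q x y) \<partial>M \<partial>M)"

definition supnorm :: "('a \<Rightarrow> real) \<Rightarrow> real" where
  "supnorm f = Sup (range (\<lambda>x. \<bar>f x\<bar>))"

text \<open>Super Poincare inequality on the closure D(E) of (E, A): f \<in> D(E) with E(f)=e iff there are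
  f_n \<in> A with f_n \<rightarrow> f in L^2(mu), (f_n) E-Cauchy, and E(f_n) \<rightarrow> e.\<close>
definition super_poincare :: "'a measure \<Rightarrow> ('a \<Rightarrow> 'a \<Rightarrow> real) \<Rightarrow> (real \<Rightarrow> real) \<Rightarrow> bool" where
  "super_poincare M q \<beta> \<longleftrightarrow>
    (\<forall>f fs e r. f \<in> borel_measurable M \<and> (\<integral>\<^sup>+ x. ennreal ((f x)\<^sup>2) \<partial>M) < \<infinity>
       \<and> (\<forall>n. fs n \<in> Aset M q)
       \<and> (\<lambda>n. \<integral>\<^sup>+ x. ennreal ((fs n x - f x)\<^sup>2) \<partial>M) \<longlonglongrightarrow> 0
       \<and> (\<forall>\<epsilon>>0. \<exists>N. \<forall>m\<ge>N. \<forall>n\<ge>N. Energy M q (\<lambda>x. fs m x - fs n x) < ennreal \<epsilon>)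
       \<and> (\<lambda>n. Energy M q (fs n)) \<longlonglongrightarrow> e
       \<and> r > 0
     \<longrightarrow> (\<integral>\<^sup>+ x. ennreal ((f x)\<^sup>2) \<partial>M)
           \<le> ennreal r * e + ennreal (\<beta> r) * (\<integral>\<^sup>+ x. ennreal \<bar>f x\<bar> \<partial>M)\<^sup>2)"

end

theory Submission
  imports Defs
begin

lemma sq2_le: "(a + b)\<^sup>2 \<le> 2 * a\<^sup>2 + 2 * (b::real)\<^sup>2"
proof -
  have "0 \<le> (a - b)\<^sup>2" by simp
  thus ?thesis by (simp add: power2_eq_square algebra_simps)
qed

theorem lemma2p7:
  fixes M :: "'a::polish_space measure"
    and q :: "'a \<Rightarrow> 'a \<Rightarrow> real"
    and V :: "'a \<Rightarrow> real"
    and z0 :: 'a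
    and \<beta> :: "real \<Rightarrow> real"
    and n k :: nat and s :: real and f :: "'a \<Rightarrow> real"
  assumes sets_M: "sets M = sets borel"
    and prob: "prob_space M"
    and q_meas: "(\<lambda>(x, y). q x y) \<in> borel_measurable (M \<Otimes>\<^sub>M M)"
    and q_nonneg: "\<And>x y. q x y \<ge> 0"
    and q_diag: "\<And>x. q x x = 0"
    and lam_fin: "lam M q < \<infinity>"
    and A_dense: "\<And>g \<epsilon>. g \<in> borel_measurable M \<Longrightarrow> (\<integral>\<^sup>+ x. ennreal ((g x)\<^sup>2) \<partial>M) < \<infinity> \<Longrightarrow> \<epsilon> > 0
                  \<Longrightarrow> \<exists>h\<in>Aset M q. (\<integral>\<^sup>+ x. ennreal ((h x - g x)\<^sup>2) \<partial>M) < ennreal \<epsilon>"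
    and V_meas: "V \<in> borel_measurable M"
    and V_bdd: "\<And>r. bounded (V ` {x. dist z0 x \<le> r})"
    and V_norm: "(\<integral>\<^sup>+ x. ennreal (exp (V x)) \<partial>M) = 1"
    and \<beta>_pos: "\<And>r. r > 0 \<Longrightarrow> \<beta> r > 0"
    and \<beta>_decr: "\<And>r t. 0 < r \<Longrightarrow> r \<le> t \<Longrightarrow> \<beta> t \<le> \<beta> r"
    and SPI: "super_poincare M q \<beta>"
    and n: "n \<ge> 1" and k: "k \<ge> 1" and s: "s > 0"
    and f: "f \<in> Aset M q"
  shows "(\<integral>\<^sup>+ x. ennreal ((f x)\<^sup>2 * indicator {x. dist z0 x \<le> real n} x) \<partial>(density M (\<lambda>x. ennreal (exp (V x)))))
    \<le> ennreal (2 * s * exp (Kc z0 V n k)) * EnergyV M q V f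
      + ennreal (16 * s * exp (Kc z0 V n k)) * lam M q
          * (\<integral>\<^sup>+ x. ennreal ((f x)\<^sup>2) \<partial>(density M (\<lambda>x. ennreal (exp (V x)))))
      + ennreal (16 * s * exp (Zc z0 V n) * (supnorm f)\<^sup>2) * eta M q z0 n k
      + ennreal (\<beta> s * exp (Jc z0 V n k))
          * (\<integral>\<^sup>+ x. ennreal \<bar>f x\<bar> \<partial>(density M (\<lambda>x. ennreal (exp (V x)))))\<^sup>2"
proof -
  interpret P: prob_space M by (rule prob)
  have spM: "space M = UNIV" using sets_eq_imp_space_eq[OF sets_M] by simp
  have idM[measurable]: "(\<lambda>x. x) \<in> measurable M borel"
    using measurable_ident_sets[OF sets_M] by (simp add: id_def)
  have fm[measurable]: "f \<in> borel_measurable M" using f by (simp add: Aset_def)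
  note V_meas[measurable] q_meas[measurable]
  have qx[measurable]: "\<And>x. (\<lambda>y. q x y) \<in> borel_measurable M"
    using measurable_Pair2[OF q_meas] by (simp add: spM)
  define D where "D = density M (\<lambda>x. ennreal (exp (V x)))"
  define \<phi> where "\<phi> = (\<lambda>x. max 0 (min 1 (real n + 1 - dist z0 x)))"
  define g where "g = (\<lambda>x. f x * \<phi> x)"
  define B where "B = supnorm f"
  define Z where "Z = Sup (V ` {x. dist z0 x \<le> real n + 1})"
  define S2 where "S2 = Sup (V ` {x. dist z0 x \<le> real n + 2})"
  define a where "a = Inf (V ` {x. dist z0 x \<le> real n + 1})"
  define a2 where "a2 = Inf (V ` {x. dist z0 x \<le> real n + real k + 2})"
  have \<phi>m[measurable]: "\<phi> \<in> borel_measurable M" unfolding \<phi>_def by measurable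
  have gm[measurable]: "g \<in> borel_measurable M" unfolding g_def by measurable
  obtain C0 where C0: "\<And>x. \<bar>f x\<bar> \<le> C0"
    using f unfolding Aset_def bounded_iff by auto
  have bddf: "bdd_above (range (\<lambda>x. \<bar>f x\<bar>))" unfolding bdd_above_def using C0 by auto
  have fB: "\<And>x. \<bar>f x\<bar> \<le> B" unfolding B_def supnorm_def using bddf by (auto intro: cSUP_upper)
  have B0: "0 \<le> B" using fB[of z0] by simp
  have f2B: "\<And>x. (f x)\<^sup>2 \<le> B\<^sup>2" by (metis power2_abs power_mono abs_ge_zero fB)
  have \<phi>01: "\<And>x. 0 \<le> \<phi> x \<and> \<phi> x \<le> 1" unfolding \<phi>_def by auto
  have \<phi>1: "\<And>x. dist z0 x \<le> real n \<Longrightarrow> \<phi> x = 1" unfolding \<phi>_def by auto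
  have \<phi>0: "\<And>x. dist z0 x \<ge> real n + 1 \<Longrightarrow> \<phi> x = 0" unfolding \<phi>_def by auto
  have \<phi>L: "\<bar>\<phi> x - \<phi> y\<bar> \<le> dist x y" for x y
  proof -
    have "\<bar>dist z0 x - dist z0 y\<bar> \<le> dist x y"
      by (smt (verit) dist_triangle dist_commute)
    then show ?thesis unfolding \<phi>_def by (auto simp: max_def min_def abs_le_iff)
  qed
  have \<phi>L2: "(\<phi> x - \<phi> y)\<^sup>2 \<le> min 1 ((dist x y)\<^sup>2)" for x y
  proof -
    have "\<bar>\<phi> x - \<phi> y\<bar> \<le> 1" using \<phi>01[of x] \<phi>01[of y] by auto
    then have "\<bar>\<phi> x - \<phi> y\<bar>\<^sup>2 \<le> 1" by (simp add: abs_square_le_1)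
    moreover have "\<bar>\<phi> x - \<phi> y\<bar>\<^sup>2 \<le> (dist x y)\<^sup>2" by (rule power_mono[OF \<phi>L]) simp
    ultimately show ?thesis by simp
  qed
  have g2B: "(g x)\<^sup>2 \<le> B\<^sup>2" for x
  proof -
    have "\<bar>f x\<bar> * \<phi> x \<le> \<bar>f x\<bar> * 1" by (rule mult_left_mono) (use \<phi>01[of x] in auto)
    then have "\<bar>g x\<bar> \<le> B" using fB[of x] \<phi>01[of x] unfolding g_def abs_mult by simp
    then show ?thesis by (metis power2_abs power_mono abs_ge_zero)
  qed
  have key: "(g x - g y)\<^sup>2 \<le> 2 * (f x - f y)\<^sup>2 + 2 * (f x)\<^sup>2 * min 1 ((dist x y)\<^sup>2)" for x y
  proof -
    have e: "g x - g y = \<phi> y * (f x - f y) + f x * (\<phi> x - \<phi> y)" unfolding g_def by algebra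
    have 1: "(\<phi> y * (f x - f y))\<^sup>2 \<le> (f x - f y)\<^sup>2"
    proof -
      have "(\<phi> y)\<^sup>2 \<le> 1" using \<phi>01[of y] by (simp add: power_le_one)
      then have "(\<phi> y)\<^sup>2 * (f x - f y)\<^sup>2 \<le> 1 * (f x - f y)\<^sup>2" by (rule mult_right_mono) simp
      then show ?thesis by (simp add: power_mult_distrib)
    qed
    have 2: "(f x * (\<phi> x - \<phi> y))\<^sup>2 \<le> (f x)\<^sup>2 * min 1 ((dist x y)\<^sup>2)"
      unfolding power_mult_distrib by (rule mult_left_mono[OF \<phi>L2]) simp
    show ?thesis unfolding e using sq2_le[of "\<phi> y * (f x - f y)" "f x * (\<phi> x - \<phi> y)"] 1 2 by linarith
  qed
  define L where "L = (\<lambda>x. \<integral>\<^sup>+ y. ennreal (min 1 ((dist x y)\<^sup>2) * q x y) \<partial>M)"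
  have Llam: "L x \<le> lam M q" for x unfolding L_def lam_def by (rule SUP_upper) simp
  have Gg: "Gam M q g x \<le> 2 * Gam M q f x + 2 * ennreal ((f x)\<^sup>2) * L x" for x
  proof -
    have "Gam M q g x \<le> (\<integral>\<^sup>+ y. ennreal (2 * ((f x - f y)\<^sup>2 * q x y)) + ennreal (2 * (f x)\<^sup>2 * (min 1 ((dist x y)\<^sup>2) * q x y)) \<partial>M)"
      unfolding Gam_def
    proof (rule nn_integral_mono)
      fix y
      have "(g x - g y)\<^sup>2 * q x y \<le> (2 * (f x - f y)\<^sup>2 + 2 * (f x)\<^sup>2 * min 1 ((dist x y)\<^sup>2)) * q x y"
        by (rule mult_right_mono[OF key q_nonneg])
      then have "ennreal ((g x - g y)\<^sup>2 * q x y) \<le> ennreal (2 * ((f x - f y)\<^sup>2 * q x y) + 2 * (f x)\<^sup>2 * (min 1 ((dist x y)\<^sup>2) * q x y))"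
        by (intro ennreal_leI) (simp add: algebra_simps)
      also have "\<dots> = ennreal (2 * ((f x - f y)\<^sup>2 * q x y)) + ennreal (2 * (f x)\<^sup>2 * (min 1 ((dist x y)\<^sup>2) * q x y))"
        by (rule ennreal_plus) (auto simp: q_nonneg)
      finally show "ennreal ((g x - g y)\<^sup>2 * q x y) \<le> ennreal (2 * ((f x - f y)\<^sup>2 * q x y)) + ennreal (2 * (f x)\<^sup>2 * (min 1 ((dist x y)\<^sup>2) * q x y))" .
    qed
    also have "\<dots> = (\<integral>\<^sup>+ y. 2 * ennreal ((f x - f y)\<^sup>2 * q x y) + 2 * ennreal ((f x)\<^sup>2) * ennreal (min 1 ((dist x y)\<^sup>2) * q x y) \<partial>M)"
      by (rule nn_integral_cong) (simp add: ennreal_mult q_nonneg mult.assoc)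
    also have "\<dots> = 2 * Gam M q f x + 2 * ennreal ((f x)\<^sup>2) * L x"
      by (subst nn_integral_add) (auto simp: Gam_def L_def nn_integral_cmult)
    finally show ?thesis .
  qed
  obtain C where C: "\<And>x. Gam M q f x \<le> ennreal C" using f unfolding Aset_def by auto
  define lr where "lr = enn2real (lam M q)"
  have lamR: "lam M q = ennreal lr" unfolding lr_def using lam_fin by simp
  have lr0: "0 \<le> lr" unfolding lr_def by simp
  have gA: "g \<in> Aset M q"
  proof -
    have "Gam M q g x \<le> ennreal (2 * max C 0 + 2 * B\<^sup>2 * lr)" for x
    proof -
      have "Gam M q g x \<le> 2 * Gam M q f x + 2 * ennreal ((f x)\<^sup>2) * L x" by (rule Gg)
      also have "\<dots> \<le> 2 * ennreal (max C 0) + 2 * ennreal (B\<^sup>2) * ennreal lr"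
        using C[of x] Llam[of x] f2B[of x] unfolding lamR
        by (intro add_mono mult_mono) (auto intro!: ennreal_leI order_trans[OF _ ennreal_leI[of C "max C 0"]])
      also have "\<dots> = ennreal (2 * max C 0 + 2 * B\<^sup>2 * lr)"
        using lr0 by (simp add: ennreal_mult ennreal_plus[symmetric])
      finally show ?thesis .
    qed
    moreover have "\<bar>g x\<bar> \<le> B" for x using g2B[of x] B0 by (simp add: abs_le_square_iff[symmetric])
    ultimately show ?thesis unfolding Aset_def bounded_iff using gm by auto
  qed
  have g2fin: "(\<integral>\<^sup>+ x. ennreal ((g x)\<^sup>2) \<partial>M) < \<infinity>"
  proof -
    have "(\<integral>\<^sup>+ x. ennreal ((g x)\<^sup>2) \<partial>M) \<le> (\<integral>\<^sup>+ x. ennreal (B\<^sup>2) \<partial>M)"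
      by (rule nn_integral_mono) (use g2B in \<open>auto intro!: ennreal_leI\<close>)
    also have "\<dots> = ennreal (B\<^sup>2)" by (simp add: P.emeasure_space_1)
    finally have "(\<integral>\<^sup>+ x. ennreal ((g x)\<^sup>2) \<partial>M) \<le> ennreal (B\<^sup>2)" .
    then show ?thesis using ennreal_less_top[of "B\<^sup>2"] unfolding infinity_ennreal_def by (rule le_less_trans)
  qed
  have E0: "Energy M q (\<lambda>x. 0) = 0" unfolding Energy_def Gam_def by simp
  have SPg: "(\<integral>\<^sup>+ x. ennreal ((g x)\<^sup>2) \<partial>M) \<le> ennreal s * Energy M q g + ennreal (\<beta> s) * (\<integral>\<^sup>+ x. ennreal \<bar>g x\<bar> \<partial>M)\<^sup>2"
  proof (rule SPI[unfolded super_poincare_def, rule_format, of g "\<lambda>_. g" "Energy M q g" s])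
    show "g \<in> borel_measurable M \<and> (\<integral>\<^sup>+ x. ennreal ((g x)\<^sup>2) \<partial>M) < \<infinity> \<and> (\<forall>n. g \<in> Aset M q)
       \<and> (\<lambda>n. \<integral>\<^sup>+ x. ennreal ((g x - g x)\<^sup>2) \<partial>M) \<longlonglongrightarrow> 0
       \<and> (\<forall>\<epsilon>>0. \<exists>N. \<forall>m\<ge>N. \<forall>n\<ge>N. Energy M q (\<lambda>x. g x - g x) < ennreal \<epsilon>)
       \<and> (\<lambda>n. Energy M q g) \<longlonglongrightarrow> Energy M q g \<and> s > 0"
      using g2fin gA E0 s gm by simp
  qed
  have bA: "\<And>r. bdd_above (V ` {x. dist z0 x \<le> r})" by (rule bounded_imp_bdd_above[OF V_bdd])
  have bB: "\<And>r. bdd_below (V ` {x. dist z0 x \<le> r})" by (rule bounded_imp_bdd_below[OF V_bdd])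
  have Vle: "V x \<le> Z" if "dist z0 x \<le> real n + 1" for x
    unfolding Z_def by (rule cSup_upper) (use that bA in auto)
  have aV: "a \<le> V x" if "dist z0 x \<le> real n + 1" for x
    unfolding a_def by (rule cInf_lower) (use that bB in auto)
  have a2V: "a2 \<le> V x" if "dist z0 x \<le> real n + real k + 2" for x
    unfolding a2_def by (rule cInf_lower) (use that bB in auto)
  have a2a: "a2 \<le> a" unfolding a_def
    by (rule cInf_greatest) (auto intro!: a2V exI[of _ z0])
  have ZS: "Z \<le> S2" unfolding Z_def
    by (rule cSup_least) (auto simp: S2_def intro!: cSup_upper bA exI[of _ z0])
  have LHS: "(\<integral>\<^sup>+ x. ennreal ((f x)\<^sup>2 * indicator {x. dist z0 x \<le> real n} x) \<partial>D) \<le> ennreal (exp Z) * (\<integral>\<^sup>+ x. ennreal ((g x)\<^sup>2) \<partial>M)"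
  proof -
    have "(\<integral>\<^sup>+ x. ennreal ((f x)\<^sup>2 * indicator {x. dist z0 x \<le> real n} x) \<partial>D) = (\<integral>\<^sup>+ x. ennreal (exp (V x)) * ennreal ((f x)\<^sup>2 * indicator {x. dist z0 x \<le> real n} x) \<partial>M)"
      unfolding D_def by (rule nn_integral_density) measurable
    also have "\<dots> \<le> (\<integral>\<^sup>+ x. ennreal (exp Z) * ennreal ((g x)\<^sup>2) \<partial>M)"
    proof (rule nn_integral_mono)
      fix x
      show "ennreal (exp (V x)) * ennreal ((f x)\<^sup>2 * indicator {x. dist z0 x \<le> real n} x) \<le> ennreal (exp Z) * ennreal ((g x)\<^sup>2)"
      proof (cases "dist z0 x \<le> real n")
        case True
        then have "g x = f x" "V x \<le> Z" using \<phi>1 Vle by (auto simp: g_def)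
        then have "exp (V x) * (f x)\<^sup>2 \<le> exp Z * (g x)\<^sup>2" by (auto intro: mult_right_mono)
        then have "ennreal (exp (V x) * (f x)\<^sup>2) \<le> ennreal (exp Z * (g x)\<^sup>2)" by (rule ennreal_leI)
        then show ?thesis using True by (simp add: ennreal_mult)
      next
        case False then show ?thesis by simp
      qed
    qed
    also have "\<dots> = ennreal (exp Z) * (\<integral>\<^sup>+ x. ennreal ((g x)\<^sup>2) \<partial>M)" by (rule nn_integral_cmult) measurable
    finally show ?thesis .
  qed
  have E2: "(\<integral>\<^sup>+ x. ennreal \<bar>g x\<bar> \<partial>M) \<le> ennreal (exp (- a)) * (\<integral>\<^sup>+ x. ennreal \<bar>f x\<bar> \<partial>D)"
  proof -
    have "(\<integral>\<^sup>+ x. ennreal \<bar>g x\<bar> \<partial>M) \<le> (\<integral>\<^sup>+ x. ennreal (exp (- a)) * (ennreal (exp (V x)) * ennreal \<bar>f x\<bar>) \<partial>M)"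
    proof (rule nn_integral_mono)
      fix x
      have "\<bar>g x\<bar> \<le> exp (- a) * (exp (V x) * \<bar>f x\<bar>)"
      proof (cases "dist z0 x \<le> real n + 1")
        case True
        then have "1 \<le> exp (- a) * exp (V x)" using aV[OF True] by (simp add: exp_add[symmetric])
        then have "\<bar>f x\<bar> * 1 \<le> \<bar>f x\<bar> * (exp (- a) * exp (V x))" by (intro mult_left_mono) auto
        moreover have "\<bar>g x\<bar> \<le> \<bar>f x\<bar>" using \<phi>01[of x] unfolding g_def abs_mult
          by (metis abs_ge_zero abs_of_nonneg mult_left_le)
        ultimately show ?thesis by (simp add: algebra_simps)
      next
        case False then have "g x = 0" using \<phi>0[of x] by (simp add: g_def)
        then show ?thesis by simp
      qed
      then show "ennreal \<bar>g x\<bar> \<le> ennreal (exp (- a)) * (ennreal (exp (V x)) * ennreal \<bar>f x\<bar>)"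
        by (simp add: ennreal_mult[symmetric] ennreal_leI)
    qed
    also have "\<dots> = ennreal (exp (- a)) * (\<integral>\<^sup>+ x. ennreal \<bar>f x\<bar> \<partial>D)"
      unfolding D_def by (subst nn_integral_density) (auto intro!: nn_integral_cmult)
    finally show ?thesis .
  qed
  have Gfm[measurable]: "Gam M q f \<in> borel_measurable M" unfolding Gam_def by measurable
  define H where "H = (\<lambda>x. \<integral>\<^sup>+ y. ennreal (indicator {x. dist z0 x > real n + real k + 2} x
       * indicator {y. dist z0 y \<le> real n + 1} y * q x y) \<partial>M)"
  have Hm[measurable]: "H \<in> borel_measurable M" unfolding H_def by measurable
  define ea2 where "ea2 = ennreal (exp (- a2))"
  have Gpt: "Gam M q g x \<le> 2 * ea2 * (ennreal (exp (V x)) * Gam M q f x)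
      + 2 * ea2 * lam M q * (ennreal (exp (V x)) * ennreal ((f x)\<^sup>2)) + ennreal (B\<^sup>2) * H x" for x
  proof (cases "dist z0 x \<le> real n + real k + 2")
    case True
    have c1: "1 \<le> ea2 * ennreal (exp (V x))"
    proof -
      have "1 \<le> exp (- a2) * exp (V x)" using a2V[OF True] by (simp add: exp_add[symmetric])
      then have "ennreal 1 \<le> ennreal (exp (- a2) * exp (V x))" by (rule ennreal_leI)
      then show ?thesis by (simp add: ea2_def ennreal_mult)
    qed
    have "Gam M q g x \<le> 2 * Gam M q f x + 2 * ennreal ((f x)\<^sup>2) * L x" by (rule Gg)
    also have "\<dots> \<le> 2 * Gam M q f x + 2 * ennreal ((f x)\<^sup>2) * lam M q"
      by (intro add_mono mult_left_mono Llam) auto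
    also have "\<dots> = 1 * (2 * Gam M q f x + 2 * ennreal ((f x)\<^sup>2) * lam M q)" by simp
    also have "\<dots> \<le> (ea2 * ennreal (exp (V x))) * (2 * Gam M q f x + 2 * ennreal ((f x)\<^sup>2) * lam M q)"
      by (rule mult_right_mono[OF c1]) simp
    also have "\<dots> = 2 * ea2 * (ennreal (exp (V x)) * Gam M q f x)
      + 2 * ea2 * lam M q * (ennreal (exp (V x)) * ennreal ((f x)\<^sup>2))"
      by (simp add: algebra_simps)
    also have "\<dots> \<le> 2 * ea2 * (ennreal (exp (V x)) * Gam M q f x)
      + 2 * ea2 * lam M q * (ennreal (exp (V x)) * ennreal ((f x)\<^sup>2)) + ennreal (B\<^sup>2) * H x"
      by simp
    finally show ?thesis .
  next
    case False
    then have gx: "g x = 0" using \<phi>0[of x] by (simp add: g_def)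
    have "Gam M q g x \<le> (\<integral>\<^sup>+ y. ennreal (B\<^sup>2) * ennreal (indicator {x. dist z0 x > real n + real k + 2} x
       * indicator {y. dist z0 y \<le> real n + 1} y * q x y) \<partial>M)"
      unfolding Gam_def
    proof (rule nn_integral_mono)
      fix y
      have "(g x - g y)\<^sup>2 * q x y \<le> B\<^sup>2 * (indicator {x. dist z0 x > real n + real k + 2} x
       * indicator {y. dist z0 y \<le> real n + 1} y * q x y)"
      proof (cases "dist z0 y \<le> real n + 1")
        case True
        then show ?thesis using False gx g2B[of y] q_nonneg[of x y] by (simp add: mult_right_mono)
      next
        case F2: False
        then have "g y = 0" using \<phi>0[of y] by (simp add: g_def)
        then show ?thesis using gx F2 by simp
      qed
      then show "ennreal ((g x - g y)\<^sup>2 * q x y) \<le> ennreal (B\<^sup>2) * ennreal (indicator {x. dist z0 x > real n + real k + 2} x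
       * indicator {y. dist z0 y \<le> real n + 1} y * q x y)"
        by (subst ennreal_mult'[symmetric]) (auto intro: ennreal_leI)
    qed
    also have "\<dots> = ennreal (B\<^sup>2) * H x" unfolding H_def by (rule nn_integral_cmult) measurable
    also have "\<dots> \<le> 2 * ea2 * (ennreal (exp (V x)) * Gam M q f x)
      + 2 * ea2 * lam M q * (ennreal (exp (V x)) * ennreal ((f x)\<^sup>2)) + ennreal (B\<^sup>2) * H x"
      by simp
    finally show ?thesis .
  qed
  have E1: "Energy M q g \<le> 2 * ea2 * EnergyV M q V f + 2 * ea2 * lam M q * (\<integral>\<^sup>+ x. ennreal ((f x)\<^sup>2) \<partial>D)
      + ennreal (B\<^sup>2) * eta M q z0 n k"
  proof -
    have "Energy M q g \<le> (\<integral>\<^sup>+ x. 2 * ea2 * (ennreal (exp (V x)) * Gam M q f x)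
      + 2 * ea2 * lam M q * (ennreal (exp (V x)) * ennreal ((f x)\<^sup>2)) + ennreal (B\<^sup>2) * H x \<partial>M)"
      unfolding Energy_def by (rule nn_integral_mono) (rule Gpt)
    also have "\<dots> = 2 * ea2 * (\<integral>\<^sup>+ x. ennreal (exp (V x)) * Gam M q f x \<partial>M)
      + 2 * ea2 * lam M q * (\<integral>\<^sup>+ x. ennreal (exp (V x)) * ennreal ((f x)\<^sup>2) \<partial>M) + ennreal (B\<^sup>2) * (\<integral>\<^sup>+ x. H x \<partial>M)"
      by (simp add: nn_integral_add nn_integral_cmult)
    also have "\<dots> = 2 * ea2 * EnergyV M q V f + 2 * ea2 * lam M q * (\<integral>\<^sup>+ x. ennreal ((f x)\<^sup>2) \<partial>D)
      + ennreal (B\<^sup>2) * eta M q z0 n k"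
      unfolding EnergyV_def D_def H_def eta_def
      by (simp add: nn_integral_density)
    finally show ?thesis .
  qed
  define F2 where "F2 = (\<integral>\<^sup>+ x. ennreal ((f x)\<^sup>2) \<partial>D)"
  define F1 where "F1 = (\<integral>\<^sup>+ x. ennreal \<bar>f x\<bar> \<partial>D)"
  define eZ where "eZ = ennreal (exp Z)"
  define ea where "ea = ennreal (exp (- a))"
  have step: "(\<integral>\<^sup>+ x. ennreal ((f x)\<^sup>2 * indicator {x. dist z0 x \<le> real n} x) \<partial>D)
     \<le> (eZ * ennreal s * 2 * ea2) * EnergyV M q V f + (eZ * ennreal s * 2 * ea2) * lam M q * F2
       + (eZ * ennreal s * ennreal (B\<^sup>2)) * eta M q z0 n k + (eZ * ennreal (\<beta> s) * ea\<^sup>2) * F1\<^sup>2"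
  proof -
    have "(\<integral>\<^sup>+ x. ennreal ((f x)\<^sup>2 * indicator {x. dist z0 x \<le> real n} x) \<partial>D) \<le> eZ * (\<integral>\<^sup>+ x. ennreal ((g x)\<^sup>2) \<partial>M)"
      unfolding eZ_def by (rule LHS)
    also have "\<dots> \<le> eZ * (ennreal s * Energy M q g + ennreal (\<beta> s) * (\<integral>\<^sup>+ x. ennreal \<bar>g x\<bar> \<partial>M)\<^sup>2)"
      by (rule mult_left_mono[OF SPg]) simp
    also have "\<dots> \<le> eZ * (ennreal s * (2 * ea2 * EnergyV M q V f + 2 * ea2 * lam M q * F2
      + ennreal (B\<^sup>2) * eta M q z0 n k) + ennreal (\<beta> s) * (ea * F1)\<^sup>2)"
      unfolding F2_def F1_def ea_def
      by (intro mult_left_mono add_mono E1 power_mono E2) auto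
    also have "\<dots> = (eZ * ennreal s * 2 * ea2) * EnergyV M q V f + (eZ * ennreal s * 2 * ea2) * lam M q * F2
       + (eZ * ennreal s * ennreal (B\<^sup>2)) * eta M q z0 n k + (eZ * ennreal (\<beta> s) * ea\<^sup>2) * F1\<^sup>2"
      by (simp add: algebra_simps power_mult_distrib)
    finally show ?thesis .
  qed
  have KK: "exp Z * exp (- a2) \<le> exp (Kc z0 V n k)"
    unfolding Kc_def S2_def[symmetric] a2_def[symmetric] using ZS by (simp add: exp_add[symmetric])
  have c1: "eZ * ennreal s * 2 * ea2 \<le> ennreal (2 * s * exp (Kc z0 V n k))"
  proof -
    have "exp Z * s * 2 * exp (- a2) \<le> 2 * s * exp (Kc z0 V n k)"
      using mult_left_mono[OF KK, of "2 * s"] s by (simp add: algebra_simps)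
    then have "ennreal (exp Z * s * 2 * exp (- a2)) \<le> ennreal (2 * s * exp (Kc z0 V n k))" by (rule ennreal_leI)
    then show ?thesis using s by (simp add: eZ_def ea2_def ennreal_mult)
  qed
  have c2: "eZ * ennreal s * 2 * ea2 \<le> ennreal (16 * s * exp (Kc z0 V n k))"
    using c1 by (rule order_trans) (use s in \<open>auto intro!: ennreal_leI\<close>)
  have c3: "eZ * ennreal s * ennreal (B\<^sup>2) \<le> ennreal (16 * s * exp (Zc z0 V n) * (supnorm f)\<^sup>2)"
  proof -
    have "exp Z * s * B\<^sup>2 \<le> 16 * s * exp Z * B\<^sup>2" using s by simp
    then have "ennreal (exp Z * s * B\<^sup>2) \<le> ennreal (16 * s * exp (Zc z0 V n) * (supnorm f)\<^sup>2)"
      unfolding Zc_def Z_def[symmetric] B_def[symmetric] by (rule ennreal_leI)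
    then show ?thesis using s by (simp add: eZ_def ennreal_mult)
  qed
  have c4: "eZ * ennreal (\<beta> s) * ea\<^sup>2 \<le> ennreal (\<beta> s * exp (Jc z0 V n k))"
  proof -
    have bs: "0 < \<beta> s" using \<beta>_pos s by blast
    have "exp Z * (exp (- a))\<^sup>2 \<le> exp (Jc z0 V n k)"
      unfolding Jc_def Z_def[symmetric] a2_def[symmetric] using a2a
      by (simp add: power2_eq_square exp_add[symmetric])
    then have "exp Z * \<beta> s * (exp (- a))\<^sup>2 \<le> \<beta> s * exp (Jc z0 V n k)"
      using mult_left_mono[of _ _ "\<beta> s"] bs by (simp add: algebra_simps)
    then have "ennreal (exp Z * \<beta> s * (exp (- a))\<^sup>2) \<le> ennreal (\<beta> s * exp (Jc z0 V n k))" by (rule ennreal_leI)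
    then show ?thesis using bs by (simp add: eZ_def ea_def ennreal_mult ennreal_power)
  qed
  have "(\<integral>\<^sup>+ x. ennreal ((f x)\<^sup>2 * indicator {x. dist z0 x \<le> real n} x) \<partial>D)
    \<le> ennreal (2 * s * exp (Kc z0 V n k)) * EnergyV M q V f
      + ennreal (16 * s * exp (Kc z0 V n k)) * lam M q * F2
      + ennreal (16 * s * exp (Zc z0 V n) * (supnorm f)\<^sup>2) * eta M q z0 n k
      + ennreal (\<beta> s * exp (Jc z0 V n k)) * F1\<^sup>2"
    using step by (rule order_trans) (intro add_mono mult_right_mono c1 c2 c3 c4; simp)
  then show ?thesis unfolding F1_def F2_def D_def .
qed

end
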